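(* Let $n\ge 6$ be even. (a) If $d_*$ and $d_*'$ are neighbors with $d_*\ne d_*'$, then $d_*$ and $d_*'$ are determined. (b) A Latin square $L$ of order $n$ with inner distance $\frac n2-1$ is a row product if and only if there exists $i\in[1,n-1]$ such that rows $i$ and $i+1$ of $L$ have the same difference row.
   Context: Symbols are $[1,n]$; $\mathrm{dist}(a,b)$ is the minimum of the residues of $a-b$ and $b-a$ mod $n$ (in $[0,n-1]$). A Latin row is a permutation $(s_1,\dots,s_n)$ of $[1,n]$; its inner distance is $\min_j\mathrm{dist}(s_j,s_{j+1})$; its difference row is $(h_1,\dots,h_{n-1})$ with $h_j\in[0,n-1]$, $h_j\equiv s_{j+1}-s_j\pmod n$, and its extended difference row is $d_*=(\epsilon_1,\dots,\epsilon_{n-1},h)$ with $\epsilon_j=h_j-\frac n2$ and $h=h_n-\frac n2$, where $h_n\in[0,n-1]$, $h_n\equiv s_1-s_n\pmod n$. A Latin rectangle is a matrix over $[1,n]$ with no repeats in rows or columns; its inner distance is the minimum of $\mathrm{dist}$ over symbols in horizontally or vertically adjacent cells. Two extended difference rows $d_*=(\epsilon_j)$ and $d_*'=(\epsilon'_j)$ of Latin rows of inner distance $\frac n2-1$ are neighbors if there are Latin rows $r,r'$ with these extended difference rows such that the $2\times n$ matrix with rows $r,r'$ is a Latin rectangle of inner distance $\frac n2-1$. They are determined if there exist $1\le j_1<j_2\le n$ with $\left|\sum_{j=j_1}^{j_2-1}(\epsilon'_j-\epsilon_j)\right|=2$. For a Latin square $L=(m_{i,j})$, $H$ is the $n\times(n-1)$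 matrix with $h_{i,j}\equiv m_{i,j+1}-m_{i,j}$ and $V$ the $(n-1)\times n$ matrix with $v_{i,j}\equiv m_{i+1,j}-m_{i,j}$ (mod $n$, in $[0,n-1]$). A row product is a Latin square obtained by adding a constant mod $n$ to all entries of $\mathrm{prod}(d,d')$, the $n\times n$ matrix with $1$ in cell $(1,1)$ whose $H$ has every row equal to a difference row $d$ and whose $V$ has every column equal to a difference row $d'$. *)

theory Defs
  imports Main
begin

text \<open>Symbols are 1..n; rows/matrices are functions with 1-based indices.
  Matrices M :: nat => nat => nat, entry M i j in row i, column j.\<close>

definition sdist :: "nat \<Rightarrow> nat \<Rightarrow> nat \<Rightarrow> nat" where
  "sdist n a b = nat (min ((int a - int b) mod int n) ((int b - int a) mod int n))"

definition latin_row :: "nat \<Rightarrow> (nat \<Rightarrow> nat) \<Rightarrow> bool" where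
  "latin_row n s \<longleftrightarrow> bij_betw s {1..n} {1..n}"

definition row_inner_dist :: "nat \<Rightarrow> (nat \<Rightarrow> nat) \<Rightarrow> nat" where
  "row_inner_dist n s = Min {sdist n (s j) (s (j+1)) | j. 1 \<le> j \<and> j \<le> n - 1}"

definition diff_row :: "nat \<Rightarrow> (nat \<Rightarrow> nat) \<Rightarrow> nat list" where
  "diff_row n s = map (\<lambda>j. nat ((int (s (j+1)) - int (s j)) mod int n)) [1..<n]"

text \<open>Extended difference row (eps_1,...,eps_{n-1},h) as a list of length n (n even).\<close>
definition ext_diff_row :: "nat \<Rightarrow> (nat \<Rightarrow> nat) \<Rightarrow> int list" where
  "ext_diff_row n s =
     map (\<lambda>j. (int (s (j+1)) - int (s j)) mod int n - int n div 2) [1..<n]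
     @ [(int (s 1) - int (s n)) mod int n - int n div 2]"

definition latin_rect :: "nat \<Rightarrow> nat \<Rightarrow> nat \<Rightarrow> (nat \<Rightarrow> nat \<Rightarrow> nat) \<Rightarrow> bool" where
  "latin_rect n m k M \<longleftrightarrow>
     (\<forall>i\<in>{1..m}. \<forall>j\<in>{1..k}. M i j \<in> {1..n}) \<and>
     (\<forall>i\<in>{1..m}. inj_on (M i) {1..k}) \<and>
     (\<forall>j\<in>{1..k}. inj_on (\<lambda>i. M i j) {1..m})"

definition rect_inner_dist :: "nat \<Rightarrow> nat \<Rightarrow> nat \<Rightarrow> (nat \<Rightarrow> nat \<Rightarrow> nat) \<Rightarrow> nat" where
  "rect_inner_dist n m k M = Min
     ({sdist n (M i j) (M i (j+1)) | i j. 1 \<le> i \<and> i \<le> m \<and> 1 \<le> j \<and> j < k} \<union>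
      {sdist n (M i j) (M (i+1) j) | i j. 1 \<le> i \<and> i < m \<and> 1 \<le> j \<and> j \<le> k})"

definition is_ext_diff_row_idist :: "nat \<Rightarrow> int list \<Rightarrow> bool" where
  "is_ext_diff_row_idist n d \<longleftrightarrow>
     (\<exists>r. latin_row n r \<and> row_inner_dist n r = n div 2 - 1 \<and> ext_diff_row n r = d)"

definition neighbors :: "nat \<Rightarrow> int list \<Rightarrow> int list \<Rightarrow> bool" where
  "neighbors n d d' \<longleftrightarrow>
     (\<exists>r r'. latin_row n r \<and> latin_row n r' \<and>
        ext_diff_row n r = d \<and> ext_diff_row n r' = d' \<and>
        latin_rect n 2 n (\<lambda>i j. if i = 1 then r j else r' j) \<and>
        rect_inner_dist n 2 n (\<lambda>i j. if i = 1 then r j else r' j) = n div 2 - 1)"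

definition determined :: "nat \<Rightarrow> int list \<Rightarrow> int list \<Rightarrow> bool" where
  "determined n d d' \<longleftrightarrow>
     (\<exists>j1 j2. 1 \<le> j1 \<and> j1 < j2 \<and> j2 \<le> n \<and>
        \<bar>\<Sum>j\<in>{j1..<j2}. d' ! (j - 1) - d ! (j - 1)\<bar> = 2)"

text \<open>prod(d,d') characterised as in the paper: the n x n matrix over 1..n with 1 in
  cell (1,1), every row of H equal to d and every column of V equal to d'.
  Column j of V is the difference row of column j of the matrix.\<close>
definition is_prod :: "nat \<Rightarrow> nat list \<Rightarrow> nat list \<Rightarrow> (nat \<Rightarrow> nat \<Rightarrow> nat) \<Rightarrow> bool" where
  "is_prod n d d' P \<longleftrightarrow>
     (\<forall>i\<in>{1..n}. \<forall>j\<in>{1..n}. P i j \<in> {1..n}) \<and> P 1 1 = 1 \<and>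
     (\<forall>i\<in>{1..n}. diff_row n (P i) = d) \<and>
     (\<forall>j\<in>{1..n}. diff_row n (\<lambda>i. P i j) = d')"

definition row_product :: "nat \<Rightarrow> (nat \<Rightarrow> nat \<Rightarrow> nat) \<Rightarrow> bool" where
  "row_product n L \<longleftrightarrow>
     (\<exists>d d' P c.
        (\<exists>r. latin_row n r \<and> diff_row n r = d) \<and>
        (\<exists>r'. latin_row n r' \<and> diff_row n r' = d') \<and>
        is_prod n d d' P \<and>
        latin_rect n n n L \<and>
        (\<forall>i\<in>{1..n}. \<forall>j\<in>{1..n}. L i j = (P i j + c - 1) mod n + 1))"

end

theory Submission
  imports Defs
begin

lemma small_mult:
  fixes N k :: int
  assumes "N > 0" "\<bar>N * k\<bar> < N"
  shows "k = 0"
proof (rule ccontr)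
  assume "k \<noteq> 0" then have "\<bar>k\<bar> \<ge> 1" by auto
  then have "N * \<bar>k\<bar> \<ge> N * 1" using assms(1) by (intro mult_left_mono) auto
  then show False using assms by (simp add: abs_mult)
qed

lemma bd0:
  fixes x N :: int
  assumes "N > 4" "N dvd x" "\<bar>x\<bar> \<le> 4"
  shows "x = 0"
proof -
  obtain k where k: "x = N * k" using assms(2) by (auto elim: dvdE)
  then have "k = 0" using assms by (intro small_mult[of N]) auto
  then show ?thesis using k by simp
qed

lemma eqmod:
  fixes a b :: nat
  assumes "a \<in> {1..n}" "b \<in> {1..n}" "int n dvd (int a - int b)"
  shows "a = b"
proof -
  have "\<bar>int a - int b\<bar> < int n" using assms(1,2) by auto
  moreover obtain k where k: "int a - int b = int n * k" using assms(3) by (auto elim: dvdE)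
  ultimately have "k = 0" using assms(1) by (intro small_mult[of "int n"]) auto
  then show ?thesis using k by simp
qed

lemma sdist_sym: "sdist n a b = sdist n b a"
  unfolding sdist_def by (simp add: min.commute)

lemma hs:
  fixes a b n :: nat
  assumes "n \<ge> 6" "even n" "sdist n a b \<ge> n div 2 - 1"
  shows "-1 \<le> (int b - int a) mod int n - int n div 2 \<and> (int b - int a) mod int n - int n div 2 \<le> 1"
proof -
  obtain h where h: "n = 2*h" using assms(2) by auto
  define y where "y = (int b - int a) mod int n"
  have y0: "0 \<le> y" "y < int n" using assms(1) by (auto simp: y_def)
  have m: "(int a - int b) mod int n = (if y = 0 then 0 else int n - y)"
  proof -
    have "int a - int b = - (int b - int a)" by simp
    then show ?thesis unfolding y_def by (simp only: zmod_zminus1_eq_if) 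
  qed
  have sd: "sdist n a b = nat (min ((int a - int b) mod int n) y)" unfolding sdist_def y_def by simp
  have hh: "int n div 2 = int h" using h by simp
  have "n div 2 - 1 = h - 1" using h by simp
  then have "h - 1 \<le> nat (min (if y = 0 then 0 else int n - y) y)" using assms(3) sd m by simp
  then have "y \<noteq> 0 \<and> int h - 1 \<le> int n - y \<and> int h - 1 \<le> y" using h assms(1) y0 by (auto split: if_splits simp: min_def)
  then show ?thesis unfolding y_def[symmetric] hh using h by auto
qed

lemma fin_pairs: "finite {f i j | i j. (a::nat) \<le> i \<and> i \<le> b \<and> (c::nat) \<le> j \<and> j \<le> e}"
proof -
  have "{f i j | i j. a \<le> i \<and> i \<le> b \<and> c \<le> j \<and> j \<le> e} \<subseteq> (\<lambda>(i,j). f i j) ` ({a..b} \<times> {c..e})"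
    by auto
  then show ?thesis by (rule finite_subset) auto
qed

lemma rid_h:
  assumes "rect_inner_dist n m k M = v" "1 \<le> i" "i \<le> m" "1 \<le> j" "j < k"
  shows "v \<le> sdist n (M i j) (M i (j+1))"
proof -
  let ?A = "{sdist n (M i j) (M i (j+1)) | i j. 1 \<le> i \<and> i \<le> m \<and> 1 \<le> j \<and> j < k}"
  let ?B = "{sdist n (M i j) (M (i+1) j) | i j. 1 \<le> i \<and> i < m \<and> 1 \<le> j \<and> j \<le> k}"
  have "?A \<subseteq> {sdist n (M i j) (M i (j+1)) | i j. 1 \<le> i \<and> i \<le> m \<and> 1 \<le> j \<and> j \<le> k}"
    by (auto simp del: One_nat_def) (metis less_imp_le)
  then have fA: "finite ?A" using fin_pairs by (rule finite_subset)
  have "?B \<subseteq> {sdist n (M i j) (M (i+1) j) | i j. 1 \<le> i \<and> i \<le> m \<and> 1 \<le> j \<and> j \<le> k}"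
    by (auto simp del: One_nat_def) (metis less_imp_le)
  then have fB: "finite ?B" using fin_pairs by (rule finite_subset)
  have "sdist n (M i j) (M i (j+1)) \<in> ?A \<union> ?B" using assms by blast
  then have "Min (?A \<union> ?B) \<le> sdist n (M i j) (M i (j+1))" using fA fB by (intro Min_le) auto
  then show ?thesis using assms(1) unfolding rect_inner_dist_def by simp
qed

lemma rid_v:
  assumes "rect_inner_dist n m k M = v" "1 \<le> i" "i < m" "1 \<le> j" "j \<le> k"
  shows "v \<le> sdist n (M i j) (M (i+1) j)"
proof -
  let ?A = "{sdist n (M i j) (M i (j+1)) | i j. 1 \<le> i \<and> i \<le> m \<and> 1 \<le> j \<and> j < k}"
  let ?B = "{sdist n (M i j) (M (i+1) j) | i j. 1 \<le> i \<and> i < m \<and> 1 \<le> j \<and> j \<le> k}"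
  have "?A \<subseteq> {sdist n (M i j) (M i (j+1)) | i j. 1 \<le> i \<and> i \<le> m \<and> 1 \<le> j \<and> j \<le> k}"
    by (auto simp del: One_nat_def) (metis less_imp_le)
  then have fA: "finite ?A" using fin_pairs by (rule finite_subset)
  have "?B \<subseteq> {sdist n (M i j) (M (i+1) j) | i j. 1 \<le> i \<and> i \<le> m \<and> 1 \<le> j \<and> j \<le> k}"
    by (auto simp del: One_nat_def) (metis less_imp_le)
  then have fB: "finite ?B" using fin_pairs by (rule finite_subset)
  have "sdist n (M i j) (M (i+1) j) \<in> ?A \<union> ?B" using assms by blast
  then have "Min (?A \<union> ?B) \<le> sdist n (M i j) (M (i+1) j)" using fA fB by (intro Min_le) auto
  then show ?thesis using assms(1) unfolding rect_inner_dist_def by simp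
qed

lemma dm: "(N::int) dvd (x mod N - x)"
proof -
  have "x mod N - x = N * (- (x div N))" by (simp add: minus_div_mult_eq_mod[symmetric] algebra_simps)
  then show ?thesis by simp
qed

lemma sum_perm:
  assumes "bij_betw r {1..n} {1..n}"
  shows "(\<Sum>j\<in>{1..n}. int (r j)) = (\<Sum>x\<in>{1..n}. int x)"
  using sum.reindex_bij_betw[OF assms, of int] by simp

lemma sum01:
  fixes f :: "nat \<Rightarrow> int"
  assumes "finite S" "int (card S) = N" "\<forall>j\<in>S. 0 \<le> f j \<and> f j \<le> 1" "N dvd sum f S" "N > 0"
  shows "(\<forall>j\<in>S. f j = 0) \<or> (\<forall>j\<in>S. f j = 1)"
proof -
  have lo: "0 \<le> sum f S" using assms(3) by (intro sum_nonneg) auto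
  have "sum f S \<le> sum (\<lambda>_. 1) S" using assms(3) by (intro sum_mono) auto
  then have hi: "sum f S \<le> N" using assms(2) by simp
  obtain k where k: "sum f S = N * k" using assms(4) by (auto elim: dvdE)
  have "k \<ge> 0" using lo k assms(5) by (simp add: zero_le_mult_iff)
  moreover have "N * k \<le> N * 1" using hi k by simp
  then have "k \<le> 1" using assms(5) by (simp only: mult_le_cancel_left_pos)
  ultimately have "k = 0 \<or> k = 1" by auto
  then show ?thesis
  proof
    assume "k = 0" then have "sum f S = 0" using k by simp
    then show ?thesis using assms(1,3) sum_nonneg_eq_0_iff[of S f] by auto
  next
    assume "k = 1" then have "sum f S = N" using k by simp
    then have "sum (\<lambda>j. 1 - f j) S = 0" using assms(2) by (simp add: sum_subtractf)
    then have "\<forall>j\<in>S. 1 - f j = 0" using assms(1,3) sum_nonneg_eq_0_iff[of S "\<lambda>j. 1 - f j"] by auto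
    then show ?thesis by auto
  qed
qed

lemma nth_ext:
  assumes "1 \<le> j" "j < n"
  shows "ext_diff_row n r ! (j-1) = (int (r (j+1)) - int (r j)) mod int n - int n div 2"
  using assms by (simp add: ext_diff_row_def nth_append)

lemma latin_row_range: "latin_row n r \<Longrightarrow> j \<in> {1..n} \<Longrightarrow> r j \<in> {1..n}"
  unfolding latin_row_def bij_betw_def by auto

lemma telesc:
  fixes f g :: "nat \<Rightarrow> int"
  assumes "\<forall>j. j1 \<le> j \<and> j < j2 \<longrightarrow> f j = g (j+1) - g j" "j1 \<le> j2"
  shows "(\<Sum>j\<in>{j1..<j2}. f j) = g j2 - g j1"
  using assms
proof (induction j2)
  case 0 then show ?case by simp
next
  case (Suc m)
  show ?case
  proof (cases "j1 = Suc m")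
    case True then show ?thesis by simp
  next
    case False
    then have "j1 \<le> m" using Suc by simp
    then have "(\<Sum>j\<in>{j1..<Suc m}. f j) = (\<Sum>j\<in>{j1..<m}. f j) + f m" by simp
    also have "\<dots> = g m - g j1 + f m" using Suc \<open>j1 \<le> m\<close> by simp
    also have "\<dots> = g (Suc m) - g j1" using Suc.prems(1) \<open>j1 \<le> m\<close> by simp
    finally show ?thesis .
  qed
qed

lemma partA:
  assumes n6: "n \<ge> 6" and ev: "even n" and nb: "neighbors n d d'" and ne: "d \<noteq> d'"
  shows "determined n d d'"
proof -
  obtain r r' where lr: "latin_row n r" and lr': "latin_row n r'"
    and dr: "ext_diff_row n r = d" and dr': "ext_diff_row n r' = d'"
    and rid: "rect_inner_dist n 2 n (\<lambda>i j. if i = 1 then r j else r' j) = n div 2 - 1"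
    using nb unfolding neighbors_def by blast
  define N where "N = int n"
  define H where "H = int n div 2"
  have N6: "N \<ge> 6" using n6 N_def by simp
  define \<delta> where "\<delta> j = (int (r' j) - int (r j)) mod N - H" for j
  define \<epsilon> where "\<epsilon> j = (int (r (j+1)) - int (r j)) mod N - H" for j
  define \<epsilon>' where "\<epsilon>' j = (int (r' (j+1)) - int (r' j)) mod N - H" for j
  have hr: "-1 \<le> \<epsilon> j \<and> \<epsilon> j \<le> 1" if "1 \<le> j" "j < n" for j
  proof -
    have "n div 2 - 1 \<le> sdist n (r j) (r (j+1))"
      using rid_h[OF rid, of 1 j] that by simp
    then show ?thesis using hs[OF n6 ev] unfolding \<epsilon>_def N_def H_def by blast
  qed
  have hr': "-1 \<le> \<epsilon>' j \<and> \<epsilon>' j \<le> 1" if "1 \<le> j" "j < n" for j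
  proof -
    have "n div 2 - 1 \<le> sdist n (r' j) (r' (j+1))"
      using rid_h[OF rid, of 2 j] that by simp
    then show ?thesis using hs[OF n6 ev] unfolding \<epsilon>'_def N_def H_def by blast
  qed
  have vr: "-1 \<le> \<delta> j \<and> \<delta> j \<le> 1" if "1 \<le> j" "j \<le> n" for j
  proof -
    have "n div 2 - 1 \<le> sdist n (r j) (r' j)"
      using rid_v[OF rid, of 1 j] that by simp
    then show ?thesis using hs[OF n6 ev] unfolding \<delta>_def N_def H_def by blast
  qed
  have key: "\<epsilon>' j - \<epsilon> j = \<delta> (j+1) - \<delta> j" if "1 \<le> j" "j < n" for j
  proof -
    let ?x = "\<epsilon>' j - \<epsilon> j - (\<delta> (j+1) - \<delta> j)"
    have "N dvd ?x"
    proof -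
      have e: "?x = ((int (r' (j+1)) - int (r' j)) mod N - (int (r' (j+1)) - int (r' j)))
         - ((int (r (j+1)) - int (r j)) mod N - (int (r (j+1)) - int (r j)))
         - ((int (r' (j+1)) - int (r (j+1))) mod N - (int (r' (j+1)) - int (r (j+1))))
         + ((int (r' j) - int (r j)) mod N - (int (r' j) - int (r j)))"
        unfolding \<delta>_def \<epsilon>_def \<epsilon>'_def by simp
      show ?thesis unfolding e by (intro dvd_add dvd_diff dm)
    qed
    moreover have "\<bar>?x\<bar> \<le> 4" using hr[OF that] hr'[OF that] vr[of j] vr[of "j+1"] that by auto
    ultimately have "?x = 0" using N6 by (intro bd0[of N]) auto
    then show ?thesis by simp
  qed
  have dn: "d ! (j-1) = \<epsilon> j" "d' ! (j-1) = \<epsilon>' j" if "1 \<le> j" "j < n" for j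
    using nth_ext[OF that] dr dr' unfolding \<epsilon>_def \<epsilon>'_def N_def H_def by auto
  have tele: "(\<Sum>j\<in>{j1..<j2}. d' ! (j - 1) - d ! (j - 1)) = \<delta> j2 - \<delta> j1"
    if "1 \<le> j1" "j1 \<le> j2" "j2 \<le> n" for j1 j2
  proof -
    have "(\<Sum>j\<in>{j1..<j2}. d' ! (j - 1) - d ! (j - 1)) = (\<Sum>j\<in>{j1..<j2}. \<epsilon>' j - \<epsilon> j)"
      using that dn by (intro sum.cong) auto
    also have "\<dots> = \<delta> j2 - \<delta> j1"
      using that key by (intro telesc) auto
    finally show ?thesis .
  qed
  have nc: "\<exists>j\<in>{1..n}. \<delta> j \<noteq> \<delta> 1"
  proof (rule ccontr)
    assume "\<not> ?thesis"
    then have c: "\<forall>j\<in>{1..n}. \<delta> j = \<delta> 1" by blast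
    have cm: "(int (r' j) - int (r j)) mod N = (int (r' 1) - int (r 1)) mod N" if "j \<in> {1..n}" for j
      using c[rule_format, OF that] unfolding \<delta>_def by simp
    have sh: "(int (r' b) - int (r' a)) mod N = (int (r b) - int (r a)) mod N"
      if "a \<in> {1..n}" "b \<in> {1..n}" for a b
    proof -
      have "N dvd ((int (r' b) - int (r b)) - (int (r' a) - int (r a)))"
      proof -
        have "N dvd (int (r' b) - int (r b) - (int (r' 1) - int (r 1))) - (int (r' a) - int (r a) - (int (r' 1) - int (r 1)))"
          using cm[OF that(1)] cm[OF that(2)] by (simp only: mod_eq_dvd_iff dvd_diff)
        then show ?thesis by (simp add: algebra_simps)
      qed
      then show ?thesis by (simp add: mod_eq_dvd_iff algebra_simps)
    qed
    have "ext_diff_row n r' = ext_diff_row n r"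
      unfolding ext_diff_row_def N_def[symmetric]
      using sh n6 by (auto intro!: map_cong)
    then show False using ne dr dr' by simp
  qed
  have bij: "bij_betw r {1..n} {1..n}" "bij_betw r' {1..n} {1..n}" using lr lr' unfolding latin_row_def by auto
  have sdvd: "N dvd (\<Sum>j\<in>{1..n}. \<delta> j)"
  proof -
    have "N dvd (\<Sum>j\<in>{1..n}. (\<delta> j - (int (r' j) - int (r j) - H)))"
    proof (intro dvd_sum)
      fix j
      have "\<delta> j - (int (r' j) - int (r j) - H) = (int (r' j) - int (r j)) mod N - (int (r' j) - int (r j))"
        unfolding \<delta>_def by simp
      then show "N dvd (\<delta> j - (int (r' j) - int (r j) - H))" using dm by metis
    qed
    moreover have "(\<Sum>j\<in>{1..n}. (\<delta> j - (int (r' j) - int (r j) - H))) = (\<Sum>j\<in>{1..n}. \<delta> j) + N * H"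
      using sum_perm[OF bij(1)] sum_perm[OF bij(2)] unfolding N_def
      by (simp add: sum_subtractf sum.distrib)
    ultimately show ?thesis by (simp add: dvd_add_left_iff)
  qed
  have pos: "\<exists>j\<in>{1..n}. \<delta> j = 1"
  proof (rule ccontr)
    assume "\<not> ?thesis"
    then have "\<forall>j\<in>{1..n}. 0 \<le> - \<delta> j \<and> - \<delta> j \<le> 1" using vr by force
    moreover have "N dvd sum (\<lambda>j. - \<delta> j) {1..n}" using sdvd by (simp add: sum_negf)
    ultimately have "(\<forall>j\<in>{1..n}. - \<delta> j = 0) \<or> (\<forall>j\<in>{1..n}. - \<delta> j = 1)"
      using N6 by (intro sum01) (auto simp: N_def)
    moreover obtain j where "j \<in> {1..n}" "\<delta> j \<noteq> \<delta> 1" using nc by blast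
    moreover have "1 \<in> {1..n}" using n6 by simp
    ultimately show False by force
  qed
  have neg: "\<exists>j\<in>{1..n}. \<delta> j = -1"
  proof (rule ccontr)
    assume "\<not> ?thesis"
    then have "\<forall>j\<in>{1..n}. 0 \<le> \<delta> j \<and> \<delta> j \<le> 1" using vr by force
    then have "(\<forall>j\<in>{1..n}. \<delta> j = 0) \<or> (\<forall>j\<in>{1..n}. \<delta> j = 1)"
      using N6 sdvd by (intro sum01) (auto simp: N_def)
    moreover obtain j where "j \<in> {1..n}" "\<delta> j \<noteq> \<delta> 1" using nc by blast
    moreover have "1 \<in> {1..n}" using n6 by simp
    ultimately show False by force
  qed
  obtain p q where p: "p \<in> {1..n}" "\<delta> p = 1" and q: "q \<in> {1..n}" "\<delta> q = -1" using pos neg by blast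
  show ?thesis
  proof (cases "p < q")
    case True
    then show ?thesis unfolding determined_def using tele[of p q] p q
      by (intro exI[of _ p] exI[of _ q]) auto
  next
    case False
    then have "q < p" using p q by (cases "p = q") auto
    then show ?thesis unfolding determined_def using tele[of q p] p q
      by (intro exI[of _ q] exI[of _ p]) auto
  qed
qed

lemma bij_ex:
  assumes "bij_betw r {1..n} {1..n}" "n > 0"
  shows "\<exists>q\<in>{1..n}. int n dvd (int (r q) - x)"
proof -
  define v where "v = nat ((x - 1) mod int n) + 1"
  have "(x - 1) mod int n < int n" "0 \<le> (x - 1) mod int n" using assms(2) by auto
  then have v: "v \<in> {1..n}" unfolding v_def by auto
  then obtain q where q: "q \<in> {1..n}" "r q = v" using assms(1) unfolding bij_betw_def by (metis imageE)
  have "int v - x = (x - 1) mod int n - (x - 1)" unfolding v_def using assms(2) by simp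
  then have "int n dvd (int v - x)" using dm by metis
  then show ?thesis using q by auto
qed

lemma bij_inj:
  assumes "bij_betw r {1..n} {1..n}" "j \<in> {1..n}" "k \<in> {1..n}" "int n dvd (int (r k) - int (r j))"
  shows "k = j"
proof -
  have "r k \<in> {1..n}" "r j \<in> {1..n}" using assms(1-3) unfolding bij_betw_def by auto
  then have "r k = r j" using eqmod assms(4) by blast
  then show ?thesis using assms(1-3) unfolding bij_betw_def inj_on_def by blast
qed

lemma step_rel:
  fixes N H :: int
  assumes "N > 4" "N dvd (sj - rj - H - uj)" "N dvd (sj1 - rj1 - H - uj1)"
    "N dvd (rj1 - rj - H - e)" "N dvd (sj1 - sj - H - e')"
    "\<bar>e\<bar> \<le> 1" "\<bar>e'\<bar> \<le> 1" "\<bar>uj\<bar> \<le> 1" "\<bar>uj1\<bar> \<le> 1"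
  shows "e' = e + uj1 - uj"
proof -
  have "N dvd ((sj1 - rj1 - H - uj1) - (sj - rj - H - uj) + (rj1 - rj - H - e) - (sj1 - sj - H - e'))"
    using assms by (intro dvd_diff[OF dvd_add[OF dvd_diff]]) auto
  moreover have "(sj1 - rj1 - H - uj1) - (sj - rj - H - uj) + (rj1 - rj - H - e) - (sj1 - sj - H - e')
     = e' - e - uj1 + uj" by simp
  ultimately have "N dvd (e' - e - uj1 + uj)" by (simp only:)
  moreover have "\<bar>e' - e - uj1 + uj\<bar> \<le> 4" using assms by auto
  ultimately have "e' - e - uj1 + uj = 0" using assms(1) by (intro bd0[of N]) auto
  then show ?thesis by simp
qed

lemma parity_lemma:
  fixes r s :: "nat \<Rightarrow> nat" and u :: "nat \<Rightarrow> int"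
  assumes n6: "n \<ge> 6" and ev: "even n"
    and br: "bij_betw r {1..n} {1..n}" and bs: "bij_betw s {1..n} {1..n}"
    and hu: "\<forall>j\<in>{1..n}. (u j = 1 \<or> u j = -1) \<and> int n dvd (int (s j) - int (r j) - int n div 2 - u j)"
    and hr: "\<forall>j. 1 \<le> j \<and> j < n \<longrightarrow> (\<exists>e. \<bar>e\<bar> \<le> 1 \<and> int n dvd (int (r (j+1)) - int (r j) - int n div 2 - e))"
    and hs': "\<forall>j. 1 \<le> j \<and> j < n \<longrightarrow> (\<exists>e. \<bar>e\<bar> \<le> 1 \<and> int n dvd (int (s (j+1)) - int (s j) - int n div 2 - e))"
  shows "\<forall>j\<in>{1..n}. u j = u 1"
proof -
  define N where "N = int n"
  define H where "H = int n div 2"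
  have NH: "N = 2 * H" using ev unfolding N_def H_def by auto
  have N6: "N \<ge> 6" using n6 unfolding N_def by simp
  note hu' = hu[unfolded H_def[symmetric], unfolded N_def[symmetric]]
  note hr' = hr[unfolded H_def[symmetric], unfolded N_def[symmetric]]
  note hs'' = hs'[unfolded H_def[symmetric], unfolded N_def[symmetric]]
  have huj: "(u j = 1 \<or> u j = -1) \<and> N dvd (int (s j) - int (r j) - H - u j)" if "j \<in> {1..n}" for j
    using hu' that by blast
  have EX: "\<exists>q\<in>{1..n}. N dvd (int (r q) - x)" for x
    using bij_ex[OF br] n6 unfolding N_def by auto
  have INJ: "k = j" if "j \<in> {1..n}" "k \<in> {1..n}" "N dvd (int (r k) - int (r j))" for j k
    using bij_inj[OF br] that unfolding N_def by blast
  have A: "u k = 1" if jk: "j \<in> {1..n}" "k \<in> {1..n}" and d: "N dvd (int (r k) - int (r j) - 2)" and uj: "u j = 1" for j k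
  proof (rule ccontr)
    assume "u k \<noteq> 1"
    then have uk: "u k = -1" using hu' jk by blast
    have "N dvd ((int (s k) - int (r k) - H - u k) - (int (s j) - int (r j) - H - u j) + (int (r k) - int (r j) - 2))"
      using hu' jk d by (intro dvd_add[OF dvd_diff]) auto
    then have "N dvd (int (s k) - int (s j))" using uj uk by (simp add: algebra_simps)
    then have "k = j" using bij_inj[OF bs jk] unfolding N_def by blast
    then have "N dvd 2" using d by simp
    then show False using N6 zdvd_imp_le[of N 2] by auto
  qed
  have Astar: "\<forall>p\<in>{1..n}. N dvd (int (r p) - int (r k) - 2 * int m) \<longrightarrow> u p = 1"
    if k: "k \<in> {1..n}" "u k = 1" for k m
  proof (induction m)
    case 0
    show ?case
    proof (intro ballI impI)
      fix p assume p: "p \<in> {1..n}" and d: "N dvd (int (r p) - int (r k) - 2 * int 0)"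
      then have "p = k" using INJ[OF k(1) p] by simp
      then show "u p = 1" using k by simp
    qed
  next
    case (Suc m)
    show ?case
    proof (intro ballI impI)
      fix p assume p: "p \<in> {1..n}" and d: "N dvd (int (r p) - int (r k) - 2 * int (Suc m))"
      obtain q where q: "q \<in> {1..n}" "N dvd (int (r q) - (int (r k) + 2 * int m))" using EX by blast
      have uq: "u q = 1" using Suc q by (simp add: algebra_simps)
      have "N dvd ((int (r p) - int (r k) - 2 * int (Suc m)) - (int (r q) - (int (r k) + 2 * int m)))"
        using dvd_diff[OF d q(2)] by simp
      then have "N dvd (int (r p) - int (r q) - 2)" by (simp add: algebra_simps)
      then show "u p = 1" using A[OF q(1) p _ uq] by blast
    qed
  qed
  have Q2: "u k = u j" if jk: "j \<in> {1..n}" "k \<in> {1..n}" and d: "N dvd (int (r k) - int (r j) - 2)" for j k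
  proof (cases "u j = 1")
    case True then show ?thesis using A[OF jk d] by simp
  next
    case False
    then have uj: "u j = -1" using hu' jk by blast
    show ?thesis
    proof (rule ccontr)
      assume "u k \<noteq> u j"
      then have uk: "u k = 1" using hu' jk uj by force
      have X: "N dvd (- (int (r k) - int (r j) - 2) - N)" using d by (intro dvd_diff) (simp_all only: dvd_minus_iff dvd_refl)
      have hn: "2 * int (nat (H - 1)) = N - 2" using NH N6 by simp
      have E: "- (int (r k) - int (r j) - 2) - N = int (r j) - int (r k) - 2 * int (nat (H - 1))" unfolding hn by simp
      have "N dvd (int (r j) - int (r k) - 2 * int (nat (H - 1)))" using X unfolding E .
      then have "u j = 1" using Astar[OF jk(2) uk] jk(1) by blast
      then show False using uj by simp
    qed
  qed
  have Q': "\<forall>j\<in>{1..n}. \<forall>k\<in>{1..n}. N dvd (int (r k) - int (r j) - 2 * int m) \<longrightarrow> u k = u j" for m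
  proof (induction m)
    case 0
    show ?case
    proof (intro ballI impI)
      fix j k assume j: "j \<in> {1..n}" and k: "k \<in> {1..n}" and d: "N dvd (int (r k) - int (r j) - 2 * int 0)"
      then have "k = j" using INJ[OF j k] by simp
      then show "u k = u j" by simp
    qed
  next
    case (Suc m)
    show ?case
    proof (intro ballI impI)
      fix j k assume j: "j \<in> {1..n}" and k: "k \<in> {1..n}" and d: "N dvd (int (r k) - int (r j) - 2 * int (Suc m))"
      obtain q where q: "q \<in> {1..n}" "N dvd (int (r q) - (int (r j) + 2 * int m))" using EX by blast
      have uq: "u q = u j" using Suc q j by (simp add: algebra_simps)
      have "N dvd ((int (r k) - int (r j) - 2 * int (Suc m)) - (int (r q) - (int (r j) + 2 * int m)))"
        using dvd_diff[OF d q(2)] by simp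
      then have "N dvd (int (r k) - int (r q) - 2)" by (simp add: algebra_simps)
      then show "u k = u j" using Q2[OF q(1) k] uq by simp
    qed
  qed
  have EVEN: "u k = u j" if jk: "j \<in> {1..n}" "k \<in> {1..n}" and e: "even (int (r k) - int (r j))" for j k
  proof (cases "int (r j) \<le> int (r k)")
    case True
    obtain t where t: "int (r k) - int (r j) = 2 * t" using e by (rule evenE)
    have "t \<ge> 0" using True t by simp
    then have "N dvd (int (r k) - int (r j) - 2 * int (nat t))" using t by simp
    then show ?thesis using Q'[of "nat t"] jk by blast
  next
    case False
    have e2: "even (int (r j) - int (r k))" using e by (metis dvd_minus_iff minus_diff_eq)
    obtain t where t: "int (r j) - int (r k) = 2 * t" using e2 by (rule evenE)
    have "t \<ge> 0" using False t by simp
    then have "N dvd (int (r j) - int (r k) - 2 * int (nat t))" using t by simp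
    then show ?thesis using Q'[of "nat t"] jk by (metis)
  qed
  have EVN: "even (x::int)" if "N dvd x - y" "even y" for x y
  proof -
    have "even N" using NH by simp
    then have "even (x - y)" using that(1) by (rule dvd_trans)
    then show ?thesis using that(2) by simp
  qed
  have EVN2: "even x \<longleftrightarrow> even y" if "N dvd x - y" for x y :: int
  proof -
    have "even N" using NH by simp
    then have "even (x - y)" using that by (rule dvd_trans)
    then show ?thesis by simp
  qed
  have STEP: "e' = e + u (j+1) - u j"
    if j: "1 \<le> j" "j < n" and e: "\<bar>e\<bar> \<le> 1" "N dvd (int (r (j+1)) - int (r j) - H - e)"
      and e': "\<bar>e'\<bar> \<le> 1" "N dvd (int (s (j+1)) - int (s j) - H - e')" for j e e'
  proof (rule step_rel[of N "int (s j)" "int (r j)" H "u j" "int (s (j+1))" "int (r (j+1))" "u (j+1)"])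
    show "N > 4" using N6 by simp
    show "N dvd int (s j) - int (r j) - H - u j" using huj[of j] j by auto
    show "N dvd int (s (j+1)) - int (r (j+1)) - H - u (j+1)" using huj[of "j+1"] j by auto
    show "\<bar>u j\<bar> \<le> 1" using huj[of j] j by auto
    show "\<bar>u (j+1)\<bar> \<le> 1" using huj[of "j+1"] j by auto
  qed (use e e' in auto)
  have ZERO: "u (j+1) = u j" if j: "1 \<le> j" "j < n" and e: "N dvd (int (r (j+1)) - int (r j) - H)" for j
  proof -
    obtain e' where e': "\<bar>e'\<bar> \<le> 1" "N dvd (int (s (j+1)) - int (s j) - H - e')" using hs'' j by blast
    have "e' = 0 + u (j+1) - u j" using STEP[OF j _ _ e', of 0] e by simp
    moreover have "u (j+1) = 1 \<or> u (j+1) = -1" "u j = 1 \<or> u j = -1" using huj[of j] huj[of "j+1"] j by auto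
    ultimately show ?thesis using e'(1) by auto
  qed
  show ?thesis
  proof (cases "\<forall>j. 1 \<le> j \<and> j < n \<longrightarrow> u (j+1) = u j")
    case True
    have "u (Suc k) = u 1" if "k < n" for k
      using that
    proof (induction k)
      case 0 then show ?case by simp
    next
      case (Suc k)
      then have "u (Suc k) = u 1" by (simp del: One_nat_def)
      moreover have "u (Suc k + 1) = u (Suc k)" using True[rule_format, of "Suc k"] Suc.prems by linarith
      ultimately show ?case by simp
    qed
    then show ?thesis
    proof (intro ballI)
      fix j assume "j \<in> {1..n}"
      then obtain k where jk: "j = Suc k" "k < n" by (cases j) auto
      have "u (Suc k) = u 1" using \<open>\<And>k. k < n \<Longrightarrow> u (Suc k) = u 1\<close>[OF jk(2)] .
      then show "u j = u 1" using jk(1) by (simp only:)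
    qed
  next
    case False
    then obtain j0 where j0: "1 \<le> j0" "j0 < n" "u (j0+1) \<noteq> u j0" by blast
    obtain e0 where e0: "\<bar>e0\<bar> \<le> 1" "N dvd (int (r (j0+1)) - int (r j0) - H - e0)" using hr' j0 by blast
    have j0r: "j0 \<in> {1..n}" "j0+1 \<in> {1..n}" using j0 by auto
    have odd0: "odd (int (r (j0+1)) - int (r j0))" using EVEN[OF j0r] j0 by blast
    have ODD: "u k \<noteq> u j" if jk: "j \<in> {1..n}" "k \<in> {1..n}" and o: "odd (int (r k) - int (r j))" for j k
    proof (cases "even (int (r j) - int (r j0))")
      case True
      then have "u j = u j0" using EVEN[OF j0r(1) jk(1)] by simp
      moreover have "even (int (r k) - int (r (j0+1)))"
      proof -
        have "int (r k) - int (r (j0+1)) = (int (r k) - int (r j)) + (int (r j) - int (r j0)) - (int (r (j0+1)) - int (r j0))" by simp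
        then show ?thesis using True o odd0 by (simp only: even_add even_diff) blast
      qed
      then have "u k = u (j0+1)" using EVEN[OF j0r(2) jk(2)] by simp
      ultimately show ?thesis using j0 by simp
    next
      case False
      moreover have "int (r j) - int (r (j0+1)) = (int (r j) - int (r j0)) - (int (r (j0+1)) - int (r j0))" by simp
      ultimately have "even (int (r j) - int (r (j0+1)))" using odd0 by (simp only: even_add even_diff)
      then have "u j = u (j0+1)" using EVEN[OF j0r(2) jk(1)] by simp
      moreover have "even (int (r k) - int (r j0))"
      proof -
        have "int (r k) - int (r j0) = (int (r k) - int (r j)) + (int (r j) - int (r j0))" by simp
        then show ?thesis using False o by (simp only: even_add even_diff)
      qed
      then have "u k = u j0" using EVEN[OF j0r(1) jk(2)] by simp
      ultimately show ?thesis using j0 by simp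
    qed
    have ZERO0: "odd H \<Longrightarrow> False"
    proof -
      assume oH: "odd H"
      have "even (int (r (j0+1)) - int (r j0))"
      proof (cases "e0 = 0")
        case True
        then have "u (j0+1) = u j0" using ZERO[OF j0(1,2)] e0 by simp
        then show ?thesis using j0 by simp
      next
        case False
        moreover have "e0 = 1 \<or> e0 = -1" using False e0(1) by auto
        ultimately have "even (H + e0)" using oH by auto
        moreover have E: "int (r (j0+1)) - int (r j0) - H - e0 = (int (r (j0+1)) - int (r j0)) - (H + e0)" by simp
        have "N dvd (int (r (j0+1)) - int (r j0)) - (H + e0)" by (subst E[symmetric]) (rule e0(2))
        ultimately show ?thesis using EVN[of "int (r (j0+1)) - int (r j0)" "H + e0"] by blast
      qed
      then show False using odd0 by simp
    qed
    then have eH: "even H" by blast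
    have C1: "(e = 0 \<and> u (j+1) = u j) \<or> (e = u j \<and> u (j+1) = - u j)"
      if j: "1 \<le> j" "j < n" and e: "\<bar>e\<bar> \<le> 1" "N dvd (int (r (j+1)) - int (r j) - H - e)" for j e
    proof (cases "e = 0")
      case True
      then show ?thesis using ZERO[OF j] e by simp
    next
      case False
      moreover have "e = 1 \<or> e = -1" using False e(1) by auto
      ultimately have "odd (H + e)" using eH by auto
      moreover have "N dvd (H + e) - (int (r (j+1)) - int (r j))"
      proof -
        have X: "N dvd - (int (r (j+1)) - int (r j) - H - e)" using e(2) by (simp only: dvd_minus_iff)
        have E: "- (int (r (j+1)) - int (r j) - H - e) = (H + e) - (int (r (j+1)) - int (r j))" by simp
        show ?thesis by (subst E[symmetric]) (rule X)
      qed
      ultimately have "odd (int (r (j+1)) - int (r j))" using EVN[of "H + e" "int (r (j+1)) - int (r j)"] by blast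
      then have ne: "u (j+1) \<noteq> u j" using ODD[of j "j+1"] j by auto
      have uu: "u (j+1) = 1 \<or> u (j+1) = -1" "u j = 1 \<or> u j = -1" using huj[of j] huj[of "j+1"] j by auto
      then have u1: "u (j+1) = - u j" using ne by auto
      obtain e' where e': "\<bar>e'\<bar> \<le> 1" "N dvd (int (s (j+1)) - int (s j) - H - e')" using hs'' j by blast
      have "e' = e + u (j+1) - u j" using STEP[OF j e e'] .
      then have "e = u j" using e'(1) e(1) u1 uu(2) False by auto
      then show ?thesis using u1 by simp
    qed
    have C2: "N dvd (int (r (j+2)) - int (r j) - u j) \<and> u (j+2) = - u j"
      if j: "1 \<le> j" "j + 2 \<le> n" for j
    proof -
      obtain e1 where e1: "\<bar>e1\<bar> \<le> 1" "N dvd (int (r (j+1)) - int (r j) - H - e1)" using hr' j by force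
      obtain e2 where e2: "\<bar>e2\<bar> \<le> 1" "N dvd (int (r (j+2)) - int (r (j+1)) - H - e2)"
        using hr'[rule_format, of "j+1"] j by force
      have c1: "(e1 = 0 \<and> u (j+1) = u j) \<or> (e1 = u j \<and> u (j+1) = - u j)" using C1[of j e1] j e1 by auto
      have c2: "(e2 = 0 \<and> u (j+2) = u (j+1)) \<or> (e2 = u (j+1) \<and> u (j+2) = - u (j+1))"
        using C1[of "j+1" e2] j e2 by (auto simp: add.assoc)
      have "N dvd ((int (r (j+1)) - int (r j) - H - e1) + (int (r (j+2)) - int (r (j+1)) - H - e2) + N)"
        using e1 e2 by (intro dvd_add) auto
      then have d: "N dvd (int (r (j+2)) - int (r j) - (e1 + e2))" using NH by (simp add: algebra_simps)
      have jr: "j \<in> {1..n}" "j+2 \<in> {1..n}" using j by auto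
      have "e1 + e2 \<noteq> 0"
      proof
        assume "e1 + e2 = 0"
        then have "j + 2 = j" using INJ[OF jr] d by simp
        then show False by simp
      qed
      then have "e1 + e2 = u j" using c1 c2 by auto
      then have d': "N dvd (int (r (j+2)) - int (r j) - u j)" using d by simp
      have "u j = 1 \<or> u j = -1" using huj[OF jr(1)] by simp
      then have "odd (u j)" by auto
      then have "odd (int (r (j+2)) - int (r j))" using EVN2[OF d'] by simp
      then have "u (j+2) \<noteq> u j" using ODD[OF jr] by auto
      moreover have "u j = 1 \<or> u j = -1" "u (j+2) = 1 \<or> u (j+2) = -1" using huj[OF jr(1)] huj[OF jr(2)] by simp_all
      ultimately have "u (j+2) = - u j" by auto
      then show ?thesis using d' by simp
    qed
    have a: "N dvd (int (r 3) - int (r 1) - u 1)" "u 3 = - u 1" using C2[of 1] n6 by (simp_all add: numeral_3_eq_3)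
    have b: "N dvd (int (r 5) - int (r 3) - u 3)" using C2[of 3] n6 by (simp add: numeral_eq_Suc)
    have "N dvd ((int (r 5) - int (r 3) - u 3) + (int (r 3) - int (r 1) - u 1))" using a b by (intro dvd_add)
    then have "N dvd (int (r 5) - int (r 1))" using a(2) by simp
    then have "5 = (1::nat)" using INJ[of 1 5] n6 by simp
    then show ?thesis by simp
  qed
qed

lemma hsd:
  assumes "n \<ge> 6" "even n" "n div 2 - 1 \<le> sdist n x y"
  shows "\<exists>e. \<bar>e\<bar> \<le> 1 \<and> int n dvd (int y - int x - int n div 2 - e)"
proof -
  define e where "e = (int y - int x) mod int n - int n div 2"
  have "\<bar>e\<bar> \<le> 1" using hs[OF assms] unfolding e_def by auto
  moreover have "int y - int x - int n div 2 - e = - ((int y - int x) mod int n - (int y - int x))"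
    unfolding e_def by simp
  then have "int n dvd (int y - int x - int n div 2 - e)" using dm by (metis dvd_minus_iff)
  ultimately show ?thesis by blast
qed

lemma sum_shift:
  fixes u :: "nat \<Rightarrow> int"
  assumes "bij_betw b {1..n} {1..n}" "bij_betw s {1..n} {1..n}" "even n"
    "\<forall>j\<in>{1..n}. int n dvd (int (s j) - int (b j) - int n div 2 - u j)"
  shows "int n dvd (\<Sum>j\<in>{1..n}. u j)"
proof -
  define N where "N = int n"
  define H where "H = int n div 2"
  have NH: "N = 2 * H" using assms(3) unfolding N_def H_def by auto
  have "N dvd (\<Sum>j\<in>{1..n}. - (int (s j) - int (b j) - H - u j))"
    using assms(4) unfolding N_def H_def by (intro dvd_sum) (simp only: dvd_minus_iff)
  moreover have "(\<Sum>j\<in>{1..n}. - (int (s j) - int (b j) - H - u j)) = (\<Sum>j\<in>{1..n}. u j) + N * H"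
    using sum_perm[OF assms(1)] sum_perm[OF assms(2)] unfolding N_def
    by (simp add: sum_subtractf sum.distrib sum_negf)
  ultimately show ?thesis unfolding N_def[symmetric] using NH by (simp add: dvd_add_left_iff)
qed

lemma three_rows:
  fixes a b s :: "nat \<Rightarrow> nat"
  assumes n6: "n \<ge> 6" and ev: "even n"
    and ba: "bij_betw a {1..n} {1..n}" and bb: "bij_betw b {1..n} {1..n}" and bs: "bij_betw s {1..n} {1..n}"
    and sh: "\<exists>c. \<forall>j\<in>{1..n}. int n dvd (int (b j) - int (a j) - c)"
    and vab: "\<forall>j\<in>{1..n}. n div 2 - 1 \<le> sdist n (a j) (b j)"
    and vbs: "\<forall>j\<in>{1..n}. n div 2 - 1 \<le> sdist n (b j) (s j)"
    and nsa: "\<forall>j\<in>{1..n}. s j \<noteq> a j"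
    and hb: "\<forall>j. 1 \<le> j \<and> j < n \<longrightarrow> n div 2 - 1 \<le> sdist n (b j) (b (j+1))"
    and hsr: "\<forall>j. 1 \<le> j \<and> j < n \<longrightarrow> n div 2 - 1 \<le> sdist n (s j) (s (j+1))"
  shows "\<exists>c. \<forall>j\<in>{1..n}. int n dvd (int (s j) - int (b j) - c)"
proof -
  define N where "N = int n"
  define H where "H = int n div 2"
  have NH: "N = 2 * H" using ev unfolding N_def H_def by auto
  have N6: "N \<ge> 6" using n6 unfolding N_def by simp
  obtain c0 where c0: "\<forall>j\<in>{1..n}. N dvd (int (b j) - int (a j) - c0)" using sh unfolding N_def by blast
  have one: "1 \<in> {1..n}" using n6 by simp
  obtain \<gamma> where g: "\<bar>\<gamma>\<bar> \<le> 1" "N dvd (int (b 1) - int (a 1) - H - \<gamma>)"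
    using hsd[OF n6 ev] vab one unfolding N_def H_def by blast
  have ab: "N dvd (int (b j) - int (a j) - H - \<gamma>)" if j: "j \<in> {1..n}" for j
  proof -
    have "N dvd ((int (b j) - int (a j) - c0) - (int (b 1) - int (a 1) - c0) + (int (b 1) - int (a 1) - H - \<gamma>))"
      using c0 j one g(2) by (intro dvd_add[OF dvd_diff]) auto
    then show ?thesis by (simp add: algebra_simps)
  qed
  define u where "u j = (int (s j) - int (b j)) mod N - H" for j
  have ub: "\<bar>u j\<bar> \<le> 1" if "j \<in> {1..n}" for j
    using hs[OF n6 ev] vbs that unfolding u_def N_def H_def by fastforce
  have ud: "N dvd (int (s j) - int (b j) - H - u j)" for j
  proof -
    have "int (s j) - int (b j) - H - u j = - ((int (s j) - int (b j)) mod N - (int (s j) - int (b j)))"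
      unfolding u_def by simp
    then show ?thesis using dm by (metis dvd_minus_iff)
  qed
  have ung: "u j \<noteq> - \<gamma>" if j: "j \<in> {1..n}" for j
  proof
    assume ug: "u j = - \<gamma>"
    have "N dvd ((int (s j) - int (b j) - H - u j) + (int (b j) - int (a j) - H - \<gamma>) + N)"
      using ud ab[OF j] by (intro dvd_add) auto
    then have "N dvd (int (s j) - int (a j))" using ug NH by (simp add: algebra_simps)
    moreover have "s j \<in> {1..n}" "a j \<in> {1..n}" using bs ba j unfolding bij_betw_def by auto
    ultimately have "s j = a j" using eqmod unfolding N_def by blast
    then show False using nsa j by blast
  qed
  have sd: "N dvd (\<Sum>j\<in>{1..n}. u j)"
    using sum_shift[OF bb bs ev] ud unfolding N_def H_def by blast
  have const: "\<forall>j\<in>{1..n}. u j = u 1"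
  proof -
    have "\<gamma> = 1 \<or> \<gamma> = -1 \<or> \<gamma> = 0" using g(1) by auto
    then show ?thesis
    proof (elim disjE)
      assume "\<gamma> = 1"
      then have "\<forall>j\<in>{1..n}. 0 \<le> u j \<and> u j \<le> 1" using ub ung by force
      then have "(\<forall>j\<in>{1..n}. u j = 0) \<or> (\<forall>j\<in>{1..n}. u j = 1)"
        using N6 sd by (intro sum01) (auto simp: N_def)
      then show ?thesis using one by (metis)
    next
      assume "\<gamma> = -1"
      then have "\<forall>j\<in>{1..n}. 0 \<le> - u j \<and> - u j \<le> 1" using ub ung by force
      moreover have "N dvd sum (\<lambda>j. - u j) {1..n}" using sd by (simp add: sum_negf)
      ultimately have "(\<forall>j\<in>{1..n}. - u j = 0) \<or> (\<forall>j\<in>{1..n}. - u j = 1)"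
        using N6 by (intro sum01) (auto simp: N_def)
      then show ?thesis
      proof (elim disjE)
        assume A: "\<forall>j\<in>{1..n}. - u j = 0"
        show ?thesis
        proof
          fix j assume "j \<in> {1..n}"
          then have "- u j = 0" "- u 1 = 0" using A one by blast+
          then show "u j = u 1" by simp
        qed
      next
        assume A: "\<forall>j\<in>{1..n}. - u j = 1"
        show ?thesis
        proof
          fix j assume "j \<in> {1..n}"
          then have "- u j = 1" "- u 1 = 1" using A one by blast+
          then show "u j = u 1" by simp
        qed
      qed
    next
      assume "\<gamma> = 0"
      then have pm: "\<forall>j\<in>{1..n}. u j = 1 \<or> u j = -1" using ub ung by force
      show ?thesis
      proof (rule parity_lemma[OF n6 ev bb bs])
        show "\<forall>j\<in>{1..n}. (u j = 1 \<or> u j = -1) \<and> int n dvd (int (s j) - int (b j) - int n div 2 - u j)"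
          using pm ud unfolding N_def H_def by blast
        show "\<forall>j. 1 \<le> j \<and> j < n \<longrightarrow> (\<exists>e. \<bar>e\<bar> \<le> 1 \<and> int n dvd (int (b (j+1)) - int (b j) - int n div 2 - e))"
          using hsd[OF n6 ev] hb by blast
        show "\<forall>j. 1 \<le> j \<and> j < n \<longrightarrow> (\<exists>e. \<bar>e\<bar> \<le> 1 \<and> int n dvd (int (s (j+1)) - int (s j) - int n div 2 - e))"
          using hsd[OF n6 ev] hsr by blast
      qed
    qed
  qed
  have "\<forall>j\<in>{1..n}. N dvd (int (s j) - int (b j) - (H + u 1))"
  proof
    fix j assume "j \<in> {1..n}"
    then have e: "u j = u 1" using const by blast
    have "int (s j) - int (b j) - (H + u 1) = int (s j) - int (b j) - H - u j" using e by simp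
    then show "N dvd (int (s j) - int (b j) - (H + u 1))" using ud[of j] by (simp only:)
  qed
  then show ?thesis unfolding N_def by blast
qed

lemma rect_row_bij:
  assumes "latin_rect n n n L" "i \<in> {1..n}"
  shows "bij_betw (L i) {1..n} {1..n}"
proof -
  have inj: "inj_on (L i) {1..n}" using assms unfolding latin_rect_def by blast
  have sub: "L i ` {1..n} \<subseteq> {1..n}" using assms unfolding latin_rect_def by blast
  have "L i ` {1..n} = {1..n}" using endo_inj_surj[OF _ sub inj] by simp
  then show ?thesis using inj unfolding bij_betw_def by blast
qed

lemma rect_col_bij:
  assumes "latin_rect n n n L" "j \<in> {1..n}"
  shows "bij_betw (\<lambda>i. L i j) {1..n} {1..n}"
proof -
  have inj: "inj_on (\<lambda>i. L i j) {1..n}" using assms unfolding latin_rect_def by blast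
  have sub: "(\<lambda>i. L i j) ` {1..n} \<subseteq> {1..n}" using assms unfolding latin_rect_def by blast
  have "(\<lambda>i. L i j) ` {1..n} = {1..n}" using endo_inj_surj[OF _ sub inj] by simp
  then show ?thesis using inj unfolding bij_betw_def by blast
qed

lemma nth_diff_row:
  assumes "1 \<le> j" "j < n"
  shows "diff_row n a ! (j-1) = nat ((int (a (j+1)) - int (a j)) mod int n)"
proof -
  have "[1..<n] ! (j-1) = j" using assms by (simp add: nth_upt)
  then show ?thesis using assms by (simp add: diff_row_def)
qed

lemma diff_shift_imp:
  assumes "\<forall>j\<in>{1..n}. int n dvd (int (b j) - int (a j) - c)"
  shows "diff_row n a = diff_row n b"
  unfolding diff_row_def
proof (rule map_cong[OF refl])
  fix j assume "j \<in> set [1..<n]"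
  then have j: "j \<in> {1..n}" "j+1 \<in> {1..n}" by auto
  have X: "int n dvd ((int (b (j+1)) - int (a (j+1)) - c) - (int (b j) - int (a j) - c))"
    using dvd_diff[OF bspec[OF assms j(2)] bspec[OF assms j(1)]] .
  have E: "(int (a (j+1)) - int (a j)) - (int (b (j+1)) - int (b j)) = - ((int (b (j+1)) - int (a (j+1)) - c) - (int (b j) - int (a j) - c))"
    by simp
  have "int n dvd ((int (a (j+1)) - int (a j)) - (int (b (j+1)) - int (b j)))"
    unfolding E dvd_minus_iff by (rule X)
  then have "(int (a (j+1)) - int (a j)) mod int n = (int (b (j+1)) - int (b j)) mod int n"
    by (simp add: mod_eq_dvd_iff)
  then show "nat ((int (a (j+1)) - int (a j)) mod int n) = nat ((int (b (j+1)) - int (b j)) mod int n)"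
    by simp
qed

lemma diff_shift_dest:
  assumes "diff_row n a = diff_row n b" "n \<ge> 1"
  shows "\<forall>j\<in>{1..n}. int n dvd (int (b j) - int (a j) - (int (b 1) - int (a 1)))"
proof -
  have "int n dvd (int (b (Suc k)) - int (a (Suc k)) - (int (b 1) - int (a 1)))" if "Suc k \<le> n" for k
    using that
  proof (induction k)
    case 0 then show ?case by simp
  next
    case (Suc k)
    have j: "1 \<le> Suc k" "Suc k < n" using Suc.prems by auto
    have "diff_row n a ! (Suc k - 1) = diff_row n b ! (Suc k - 1)" using assms(1) by simp
    then have "nat ((int (a (Suc k + 1)) - int (a (Suc k))) mod int n) = nat ((int (b (Suc k + 1)) - int (b (Suc k))) mod int n)"
      using nth_diff_row[OF j, of a] nth_diff_row[OF j, of b] by simp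
    then have "(int (a (Suc k + 1)) - int (a (Suc k))) mod int n = (int (b (Suc k + 1)) - int (b (Suc k))) mod int n"
      using j by (simp add: nat_eq_iff)
    then have "(int (b (Suc k + 1)) - int (b (Suc k))) mod int n = (int (a (Suc k + 1)) - int (a (Suc k))) mod int n"
      by simp
    then have d1: "int n dvd ((int (b (Suc k + 1)) - int (b (Suc k))) - (int (a (Suc k + 1)) - int (a (Suc k))))"
      by (simp only: mod_eq_dvd_iff)
    have d2: "int n dvd (int (b (Suc k)) - int (a (Suc k)) - (int (b 1) - int (a 1)))" using Suc by simp
    have "int n dvd (((int (b (Suc k + 1)) - int (b (Suc k))) - (int (a (Suc k + 1)) - int (a (Suc k))))
       + (int (b (Suc k)) - int (a (Suc k)) - (int (b 1) - int (a 1))))"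
      using d1 d2 by (rule dvd_add)
    then show ?case by (simp add: algebra_simps)
  qed
  then show ?thesis
  proof (intro ballI)
    fix j assume j: "j \<in> {1..n}"
    then have "Suc (j - 1) \<le> n" "Suc (j - 1) = j" by auto
    then show "int n dvd (int (b j) - int (a j) - (int (b 1) - int (a 1)))"
      using \<open>\<And>k. Suc k \<le> n \<Longrightarrow> _\<close> by metis
  qed
qed

lemma dvd_neg_shift:
  fixes N x y c :: int
  assumes "N dvd (x - y - c)"
  shows "N dvd (y - x - (- c))"
proof -
  have e: "y - x - (- c) = - (x - y - c)" by simp
  show ?thesis unfolding e dvd_minus_iff by (rule assms)
qed

lemma partB:
  assumes n6: "n \<ge> 6" and ev: "even n" and lr: "latin_rect n n n L"
    and rid: "rect_inner_dist n n n L = n div 2 - 1"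
  shows "row_product n L \<longleftrightarrow> (\<exists>i\<in>{1..n-1}. diff_row n (L i) = diff_row n (L (i+1)))"
proof
  assume "row_product n L"
  then obtain d d' P c where ip: "is_prod n d d' P"
    and Leq: "\<forall>i\<in>{1..n}. \<forall>j\<in>{1..n}. L i j = (P i j + c - 1) mod n + 1"
    unfolding row_product_def by blast
  have dr: "diff_row n (L i) = d" if i: "i \<in> {1..n}" for i
  proof -
    have "\<forall>j\<in>{1..n}. int n dvd (int (L i j) - int (P i j) - int c)"
    proof
      fix j assume j: "j \<in> {1..n}"
      have P1: "P i j \<ge> 1" using ip i j unfolding is_prod_def by auto
      define X where "X = P i j + c - 1"
      have iX: "int X = int (P i j) + int c - 1" using P1 unfolding X_def by simp
      have "int (L i j) = int (X mod n) + 1" using Leq i j unfolding X_def by simp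
      also have "\<dots> = int X mod int n + 1" by (simp add: zmod_int)
      finally have "int (L i j) - int (P i j) - int c = int X mod int n - int X" using iX by simp
      then show "int n dvd (int (L i j) - int (P i j) - int c)" using dm by metis
    qed
    then have "diff_row n (P i) = diff_row n (L i)" by (rule diff_shift_imp)
    moreover have "diff_row n (P i) = d" using ip i unfolding is_prod_def by blast
    ultimately show ?thesis by simp
  qed
  have "1 \<in> {1..n-1}" "1 \<in> {1..n}" "2 \<in> {1..n}" using n6 by auto
  then show "\<exists>i\<in>{1..n-1}. diff_row n (L i) = diff_row n (L (i+1))"
    using dr[of 1] dr[of 2] by (intro bexI[of _ 1]) (auto simp: numeral_2_eq_2)
next
  assume "\<exists>i\<in>{1..n-1}. diff_row n (L i) = diff_row n (L (i+1))"
  then obtain i0 where i0: "i0 \<in> {1..n-1}" "diff_row n (L i0) = diff_row n (L (i0+1))" by blast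
  define N where "N = int n"
  define sh where "sh i \<longleftrightarrow> (\<exists>c. \<forall>j\<in>{1..n}. N dvd (int (L (i+1) j) - int (L i j) - c))" for i
  have R: "bij_betw (L i) {1..n} {1..n}" if "i \<in> {1..n}" for i using rect_row_bij[OF lr that] .
  have Cb: "bij_betw (\<lambda>i. L i j) {1..n} {1..n}" if "j \<in> {1..n}" for j using rect_col_bij[OF lr that] .
  have Hd: "n div 2 - 1 \<le> sdist n (L i j) (L i (j+1))" if "1 \<le> i" "i \<le> n" "1 \<le> j" "j < n" for i j
    using rid_h[OF rid that] .
  have Vd: "n div 2 - 1 \<le> sdist n (L i j) (L (i+1) j)" if "1 \<le> i" "i < n" "1 \<le> j" "j \<le> n" for i j
    using rid_v[OF rid that] .
  have colinj: "L i j \<noteq> L k j" if "i \<in> {1..n}" "k \<in> {1..n}" "i \<noteq> k" "j \<in> {1..n}" for i j k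
    using lr that unfolding latin_rect_def inj_on_def by blast
  have fwd: "sh (i+1)" if i: "1 \<le> i" "i + 2 \<le> n" and s: "sh i" for i
  proof -
    have "\<exists>c. \<forall>j\<in>{1..n}. int n dvd (int (L (i+2) j) - int (L (i+1) j) - c)"
    proof (rule three_rows[OF n6 ev R R R])
      show "i \<in> {1..n}" "i+1 \<in> {1..n}" "i+2 \<in> {1..n}" using i by auto
      show "\<exists>c. \<forall>j\<in>{1..n}. int n dvd (int (L (i+1) j) - int (L i j) - c)" using s unfolding sh_def N_def .
      show "\<forall>j\<in>{1..n}. n div 2 - 1 \<le> sdist n (L i j) (L (i+1) j)" using Vd i by auto
      show "\<forall>j\<in>{1..n}. n div 2 - 1 \<le> sdist n (L (i+1) j) (L (i+2) j)"
        using Vd[of "i+1"] i by (auto simp: add.assoc)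
      show "\<forall>j\<in>{1..n}. L (i+2) j \<noteq> L i j" using colinj i by auto
      show "\<forall>j. 1 \<le> j \<and> j < n \<longrightarrow> n div 2 - 1 \<le> sdist n (L (i+1) j) (L (i+1) (j+1))"
        using Hd i by auto
      show "\<forall>j. 1 \<le> j \<and> j < n \<longrightarrow> n div 2 - 1 \<le> sdist n (L (i+2) j) (L (i+2) (j+1))"
        using Hd i by auto
    qed
    then show ?thesis unfolding sh_def N_def by (simp add: add.assoc)
  qed
  have bwd: "sh (i-1)" if i: "2 \<le> i" "i + 1 \<le> n" and s: "sh i" for i
  proof -
    obtain c where c: "\<forall>j\<in>{1..n}. N dvd (int (L (i+1) j) - int (L i j) - c)" using s unfolding sh_def by blast
    have "\<exists>c. \<forall>j\<in>{1..n}. int n dvd (int (L (i-1) j) - int (L i j) - c)"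
    proof (rule three_rows[OF n6 ev R R R])
      show "i+1 \<in> {1..n}" "i \<in> {1..n}" "i-1 \<in> {1..n}" using i by auto
      show "\<exists>c. \<forall>j\<in>{1..n}. int n dvd (int (L i j) - int (L (i+1) j) - c)"
      proof (intro exI ballI)
        fix j assume "j \<in> {1..n}"
        then have "N dvd (int (L (i+1) j) - int (L i j) - c)" using c by blast
        then show "int n dvd (int (L i j) - int (L (i+1) j) - (- c))" unfolding N_def by (rule dvd_neg_shift)
      qed
      show "\<forall>j\<in>{1..n}. n div 2 - 1 \<le> sdist n (L (i+1) j) (L i j)"
        using Vd[of i] i by (auto simp: sdist_sym)
      show "\<forall>j\<in>{1..n}. n div 2 - 1 \<le> sdist n (L i j) (L (i-1) j)"
      proof
        fix j assume "j \<in> {1..n}"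
        then have "n div 2 - 1 \<le> sdist n (L (i-1) j) (L (i-1+1) j)" using Vd[of "i-1" j] i by auto
        then show "n div 2 - 1 \<le> sdist n (L i j) (L (i-1) j)" using i by (simp add: sdist_sym)
      qed
      show "\<forall>j\<in>{1..n}. L (i-1) j \<noteq> L (i+1) j"
      proof
        fix j assume "j \<in> {1..n}"
        moreover have "i - 1 \<in> {1..n}" "i + 1 \<in> {1..n}" "i - 1 \<noteq> i + 1" using i by auto
        ultimately show "L (i-1) j \<noteq> L (i+1) j" using colinj by blast
      qed
      show "\<forall>j. 1 \<le> j \<and> j < n \<longrightarrow> n div 2 - 1 \<le> sdist n (L i j) (L i (j+1))"
        using Hd i by auto
      show "\<forall>j. 1 \<le> j \<and> j < n \<longrightarrow> n div 2 - 1 \<le> sdist n (L (i-1) j) (L (i-1) (j+1))"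
        using Hd i by auto
    qed
    then obtain c' where c': "\<forall>j\<in>{1..n}. int n dvd (int (L (i-1) j) - int (L i j) - c')" by blast
    have "\<forall>j\<in>{1..n}. N dvd (int (L (i-1+1) j) - int (L (i-1) j) - (- c'))"
    proof
      fix j assume "j \<in> {1..n}"
      then have "N dvd (int (L (i-1) j) - int (L i j) - c')" using c' unfolding N_def by blast
      then have "N dvd (int (L i j) - int (L (i-1) j) - (- c'))" by (rule dvd_neg_shift)
      moreover have "i - 1 + 1 = i" using i by simp
      ultimately show "N dvd (int (L (i-1+1) j) - int (L (i-1) j) - (- c'))" by simp
    qed
    then show ?thesis unfolding sh_def by blast
  qed
  have sh0: "sh i0"
  proof -
    have "1 \<le> n" using n6 by simp
    then show ?thesis using diff_shift_dest[OF i0(2)] unfolding sh_def N_def by blast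
  qed
  have shf: "sh (i0 + k)" if "i0 + k \<le> n - 1" for k
    using that
  proof (induction k)
    case 0 then show ?case using sh0 by simp
  next
    case (Suc k)
    then have "sh (i0 + k)" by simp
    moreover have "1 \<le> i0 + k" "i0 + k + 2 \<le> n" using Suc.prems i0 by auto
    ultimately show ?case using fwd by simp
  qed
  have shb: "sh (i0 - k)" if "k < i0" for k
    using that
  proof (induction k)
    case 0 then show ?case using sh0 by simp
  next
    case (Suc k)
    then have "sh (i0 - k)" by simp
    moreover have "2 \<le> i0 - k" "i0 - k + 1 \<le> n" using Suc.prems i0 by auto
    ultimately have "sh (i0 - k - 1)" using bwd by blast
    then show ?case by simp
  qed
  have shall: "sh i" if "i \<in> {1..n-1}" for i
  proof (cases "i0 \<le> i")
    case True
    then show ?thesis using shf[of "i - i0"] that by simp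
  next
    case False
    then show ?thesis using shb[of "i0 - i"] that by simp
  qed
  have rs: "\<exists>c. \<forall>j\<in>{1..n}. N dvd (int (L (Suc k) j) - int (L 1 j) - c)" if "Suc k \<le> n" for k
    using that
  proof (induction k)
    case 0 then show ?case by (intro exI[of _ 0]) simp
  next
    case (Suc k)
    obtain c1 where c1: "\<forall>j\<in>{1..n}. N dvd (int (L (Suc k) j) - int (L 1 j) - c1)" using Suc by auto
    have "Suc k \<in> {1..n-1}" using Suc.prems by auto
    then obtain c2 where c2: "\<forall>j\<in>{1..n}. N dvd (int (L (Suc k + 1) j) - int (L (Suc k) j) - c2)"
      using shall unfolding sh_def by blast
    have "\<forall>j\<in>{1..n}. N dvd (int (L (Suc (Suc k)) j) - int (L 1 j) - (c1 + c2))"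
    proof
      fix j assume j: "j \<in> {1..n}"
      have "N dvd ((int (L (Suc k + 1) j) - int (L (Suc k) j) - c2) + (int (L (Suc k) j) - int (L 1 j) - c1))"
        using c1 c2 j by (intro dvd_add) auto
      then show "N dvd (int (L (Suc (Suc k)) j) - int (L 1 j) - (c1 + c2))" by (simp add: algebra_simps)
    qed
    then show ?case by blast
  qed
  have rs': "\<exists>c. \<forall>j\<in>{1..n}. N dvd (int (L i j) - int (L 1 j) - c)" if "i \<in> {1..n}" for i
    using rs[of "i-1"] that by (cases i) auto
  have one: "1 \<in> {1..n}" using n6 by simp
  have L11: "L 1 1 \<in> {1..n}" using lr one unfolding latin_rect_def by blast
  have Lr: "L i j \<in> {1..n}" if "i \<in> {1..n}" "j \<in> {1..n}" for i j using lr that unfolding latin_rect_def by blast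
  define P where "P i j = nat ((int (L i j) - int (L 1 1)) mod N) + 1" for i j
  define c where "c = L 1 1 - 1"
  have Pd: "N dvd (int (P i j) - int (L i j) - (1 - int (L 1 1)))" for i j
  proof -
    have "0 \<le> (int (L i j) - int (L 1 1)) mod N" using n6 unfolding N_def by simp
    then have "int (P i j) - int (L i j) - (1 - int (L 1 1)) = (int (L i j) - int (L 1 1)) mod N - (int (L i j) - int (L 1 1))"
      unfolding P_def by simp
    then show ?thesis using dm by metis
  qed
  have Prow: "diff_row n (P i) = diff_row n (L 1)" if i: "i \<in> {1..n}" for i
  proof -
    have "diff_row n (L i) = diff_row n (P i)" using Pd unfolding N_def by (intro diff_shift_imp) blast
    moreover obtain ci where "\<forall>j\<in>{1..n}. N dvd (int (L i j) - int (L 1 j) - ci)" using rs'[OF i] by blast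
    then have "diff_row n (L 1) = diff_row n (L i)" unfolding N_def by (intro diff_shift_imp) blast
    ultimately show ?thesis by simp
  qed
  have Pcol: "diff_row n (\<lambda>i. P i j) = diff_row n (\<lambda>i. L i 1)" if j: "j \<in> {1..n}" for j
  proof -
    have "\<forall>i\<in>{1..n}. N dvd (int (P i j) - int (L i 1) - (int (L 1 j) - 2 * int (L 1 1) + 1))"
    proof
      fix i assume i: "i \<in> {1..n}"
      obtain ci where ci: "\<forall>j\<in>{1..n}. N dvd (int (L i j) - int (L 1 j) - ci)" using rs'[OF i] by blast
      have "N dvd ((int (P i j) - int (L i j) - (1 - int (L 1 1))) + (int (L i j) - int (L 1 j) - ci) - (int (L i 1) - int (L 1 1) - ci))"
        using Pd ci j one by (intro dvd_diff[OF dvd_add]) auto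
      then show "N dvd (int (P i j) - int (L i 1) - (int (L 1 j) - 2 * int (L 1 1) + 1))"
        by (simp add: algebra_simps)
    qed
    then have "diff_row n (\<lambda>i. L i 1) = diff_row n (\<lambda>i. P i j)" unfolding N_def by (intro diff_shift_imp) blast
    then show ?thesis by simp
  qed
  have isp: "is_prod n (diff_row n (L 1)) (diff_row n (\<lambda>i. L i 1)) P"
    unfolding is_prod_def
  proof (intro conjI ballI)
    fix i j assume "i \<in> {1..n}" "j \<in> {1..n}"
    have "(int (L i j) - int (L 1 1)) mod N < N" "0 \<le> (int (L i j) - int (L 1 1)) mod N" using n6 unfolding N_def by auto
    then show "P i j \<in> {1..n}" unfolding P_def N_def by auto
  next
    show "P 1 1 = 1" unfolding P_def by simp
  next
    fix i assume "i \<in> {1..n}" then show "diff_row n (P i) = diff_row n (L 1)" by (rule Prow)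
  next
    fix j assume "j \<in> {1..n}" then show "diff_row n (\<lambda>i. P i j) = diff_row n (\<lambda>i. L i 1)" by (rule Pcol)
  qed
  have Lrec: "L i j = (P i j + c - 1) mod n + 1" if i: "i \<in> {1..n}" and j: "j \<in> {1..n}" for i j
  proof -
    define X where "X = P i j + c - 1"
    have iX: "int X = int (P i j) + int (L 1 1) - 2" using L11 unfolding X_def c_def P_def by auto
    define y where "y = X mod n + 1"
    have "X mod n < n" using n6 by simp
    then have y: "y \<in> {1..n}" unfolding y_def by auto
    have "int y = int X mod N + 1" unfolding y_def N_def by (simp add: zmod_int)
    then have E: "int y - int (L i j) = (int X mod N - int X) + (int (P i j) - int (L i j) - (1 - int (L 1 1)))"
      using iX by simp
    have "N dvd (int y - int (L i j))" unfolding E by (rule dvd_add[OF dm Pd])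
    then have "y = L i j" using eqmod[OF y Lr[OF i j]] unfolding N_def by blast
    then show ?thesis unfolding y_def X_def by simp
  qed
  show "row_product n L"
    unfolding row_product_def
  proof (rule exI[of _ "diff_row n (L 1)"], rule exI[of _ "diff_row n (\<lambda>i. L i 1)"], rule exI[of _ P], rule exI[of _ c], intro conjI)
    show "\<exists>r. latin_row n r \<and> diff_row n r = diff_row n (L 1)"
      using R[OF one] unfolding latin_row_def by blast
    show "\<exists>r'. latin_row n r' \<and> diff_row n r' = diff_row n (\<lambda>i. L i 1)"
      using Cb[OF one] unfolding latin_row_def by blast
    show "is_prod n (diff_row n (L 1)) (diff_row n (\<lambda>i. L i 1)) P" by (rule isp)
    show "latin_rect n n n L" by (rule lr)
    show "\<forall>i\<in>{1..n}. \<forall>j\<in>{1..n}. L i j = (P i j + c - 1) mod n + 1" using Lrec by blast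
  qed
qed

theorem mainTheorem8:
  fixes n :: nat
  assumes "n \<ge> 6" and "even n"
  shows "(\<forall>d d'. is_ext_diff_row_idist n d \<and> is_ext_diff_row_idist n d' \<and>
            neighbors n d d' \<and> d \<noteq> d' \<longrightarrow> determined n d d') \<and>
         (\<forall>L. latin_rect n n n L \<and> rect_inner_dist n n n L = n div 2 - 1 \<longrightarrow>
            (row_product n L \<longleftrightarrow>
               (\<exists>i\<in>{1..n-1}. diff_row n (L i) = diff_row n (L (i+1)))))"
proof (intro conjI allI impI)
  fix d d' assume "is_ext_diff_row_idist n d \<and> is_ext_diff_row_idist n d' \<and> neighbors n d d' \<and> d \<noteq> d'"
  then show "determined n d d'" using partA[OF assms] by blast
next
  fix L assume "latin_rect n n n L \<and> rect_inner_dist n n n L = n div 2 - 1"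
  then show "row_product n L \<longleftrightarrow> (\<exists>i\<in>{1..n-1}. diff_row n (L i) = diff_row n (L (i+1)))"
    using partB[OF assms] by blast
qed

end
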